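(* Let $S$ be a $\Gamma$-hemiring. If $\mu$ is a prime fuzzy h-ideal of $S$ and $x\in S$ with $x\notin\mu_0$, then $\langle x,\mu\rangle=\mu$. Conversely, let $\mu$ be a fuzzy h-ideal of $S$ with $\operatorname{Im}\mu=\{1,t\}$ for some $t\in[0,1)$; if $\langle x,\mu\rangle=\mu$ for every $x\in S$ with $\mu(x)=t$, then $\mu$ is a prime fuzzy h-ideal of $S$.
   Context: A $\Gamma$-hemiring is a pair of additive commutative semigroups with zero $S$ and $\Gamma$ with a map $S\times\Gamma\times S\to S$, $(a,\alpha,b)\mapsto a\alpha b$, such that for all $a,b,c\in S$, $\alpha,\beta\in\Gamma$: $(a+b)\alpha c=a\alpha c+b\alpha c$; $a\alpha(b+c)=a\alpha b+a\alpha c$; $a(\alpha+\beta)b=a\alpha b+a\beta b$; $a\alpha(b\beta c)=(a\alpha b)\beta c$; $0\alpha a=0=a\alpha0$; $a0b=0=b0a$. A fuzzy h-ideal of $S$ is a map $\mu:S\to[0,1]$, not identically $0$, such that for all $x,y,a,b,z\in S$, $\gamma\in\Gamma$: $\mu(x+y)\ge\min\{\mu(x),\mu(y)\}$; $\mu(x\gamma y)\ge\mu(x)$ and $\mu(x\gamma y)\ge\mu(y)$; $x+a+z=b+z$ implies $\mu(x)\ge\min\{\mu(a),\mu(b)\}$. For fuzzy subsets $\sigma,\theta$, the h-product is $(\sigma\Gamma_h\theta)(x)=\sup\min\{\sigma(a_1),\sigma(a_2),\theta(b_1),\theta(b_2)\}$, the supremum over all $z,a_1,a_2,b_1,b_2\in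 S$, $\gamma,\delta\in\Gamma$ with $x+a_1\gamma b_1+z=a_2\delta b_2+z$, and $0$ if no such expression exists. Inclusion means pointwise $\le$. A fuzzy h-ideal $\mu$ is prime if it is not constant and for any fuzzy h-ideals $\sigma,\theta$, $\sigma\Gamma_h\theta\subseteq\mu$ implies $\sigma\subseteq\mu$ or $\theta\subseteq\mu$. $\mu_0=\{x\in S:\mu(x)=\mu(0)\}$; $\operatorname{Im}\mu$ is the image of $\mu$. The extension of $\mu$ by $x$ is $\langle x,\mu\rangle(y)=\inf_{s\in S,\ \alpha,\gamma\in\Gamma}\mu(x\alpha s\gamma y)$. *)

theory Defs
  imports Main "HOL.Real"
begin

text \<open>A Gamma-hemiring: S (the type 'a) and Gamma (the type 'g) are additive commutative
  semigroups with zero (modelled as comm_monoid_add), together with a ternary operation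
  M a alpha b = a alpha b.\<close>

definition gamma_hemiring :: "('a::comm_monoid_add \<Rightarrow> 'g::comm_monoid_add \<Rightarrow> 'a \<Rightarrow> 'a) \<Rightarrow> bool" where
  "gamma_hemiring M \<longleftrightarrow>
     (\<forall>a b c \<alpha>. M (a + b) \<alpha> c = M a \<alpha> c + M b \<alpha> c) \<and>
     (\<forall>a b c \<alpha>. M a \<alpha> (b + c) = M a \<alpha> b + M a \<alpha> c) \<and>
     (\<forall>a b \<alpha> \<beta>. M a (\<alpha> + \<beta>) b = M a \<alpha> b + M a \<beta> b) \<and>
     (\<forall>a b c \<alpha> \<beta>. M a \<alpha> (M b \<beta> c) = M (M a \<alpha> b) \<beta> c) \<and>
     (\<forall>a \<alpha>. M 0 \<alpha> a = 0 \<and> M a \<alpha> 0 = 0) \<and>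
     (\<forall>a b. M a 0 b = 0 \<and> M b 0 a = 0)"

definition fuzzy_subset :: "('a \<Rightarrow> real) \<Rightarrow> bool" where
  "fuzzy_subset \<mu> \<longleftrightarrow> (\<forall>x. 0 \<le> \<mu> x \<and> \<mu> x \<le> 1)"

definition fuzzy_h_ideal :: "('a::comm_monoid_add \<Rightarrow> 'g \<Rightarrow> 'a \<Rightarrow> 'a) \<Rightarrow> ('a \<Rightarrow> real) \<Rightarrow> bool" where
  "fuzzy_h_ideal M \<mu> \<longleftrightarrow>
     fuzzy_subset \<mu> \<and> (\<exists>x. \<mu> x \<noteq> 0) \<and>
     (\<forall>x y. \<mu> (x + y) \<ge> min (\<mu> x) (\<mu> y)) \<and>
     (\<forall>x y \<gamma>. \<mu> (M x \<gamma> y) \<ge> \<mu> x \<and> \<mu> (M x \<gamma> y) \<ge> \<mu> y) \<and>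
     (\<forall>x a b z. x + a + z = b + z \<longrightarrow> \<mu> x \<ge> min (\<mu> a) (\<mu> b))"

definition h_product :: "('a::comm_monoid_add \<Rightarrow> 'g \<Rightarrow> 'a \<Rightarrow> 'a) \<Rightarrow> ('a \<Rightarrow> real) \<Rightarrow> ('a \<Rightarrow> real) \<Rightarrow> 'a \<Rightarrow> real" where
  "h_product M \<sigma> \<theta> x =
     (let V = {min (min (\<sigma> a1) (\<sigma> a2)) (min (\<theta> b1) (\<theta> b2)) | z a1 a2 b1 b2 \<gamma> \<delta>.
                 x + M a1 \<gamma> b1 + z = M a2 \<delta> b2 + z}
      in if V = {} then 0 else Sup V)"

definition prime_fuzzy_h_ideal :: "('a::comm_monoid_add \<Rightarrow> 'g \<Rightarrow> 'a \<Rightarrow> 'a) \<Rightarrow> ('a \<Rightarrow> real) \<Rightarrow> bool" where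
  "prime_fuzzy_h_ideal M \<mu> \<longleftrightarrow>
     fuzzy_h_ideal M \<mu> \<and> (\<exists>x y. \<mu> x \<noteq> \<mu> y) \<and>
     (\<forall>\<sigma> \<theta>. fuzzy_h_ideal M \<sigma> \<and> fuzzy_h_ideal M \<theta> \<and> h_product M \<sigma> \<theta> \<le> \<mu>
        \<longrightarrow> \<sigma> \<le> \<mu> \<or> \<theta> \<le> \<mu>)"

definition level_zero :: "('a::zero \<Rightarrow> real) \<Rightarrow> 'a set" where
  "level_zero \<mu> = {x. \<mu> x = \<mu> 0}"

definition fuzzy_ext :: "('a \<Rightarrow> 'g \<Rightarrow> 'a \<Rightarrow> 'a) \<Rightarrow> 'a \<Rightarrow> ('a \<Rightarrow> real) \<Rightarrow> 'a \<Rightarrow> real" where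
  "fuzzy_ext M x \<mu> y = (INF p \<in> (UNIV :: ('a \<times> 'g \<times> 'g) set). \<mu> (M (M x (fst (snd p)) (fst p)) (snd (snd p)) y))"

end

theory Submission
  imports Defs
begin

lemma hr:
  assumes "gamma_hemiring M"
  shows "M (a + b) \<alpha> c = M a \<alpha> c + M b \<alpha> c"
    "M a \<alpha> (b + c) = M a \<alpha> b + M a \<alpha> c"
    "M a \<alpha> (M b \<beta> c) = M (M a \<alpha> b) \<beta> c"
    "M 0 \<alpha> a = 0" "M a \<alpha> 0 = 0"
  using assms unfolding gamma_hemiring_def by auto

lemma fi:
  fixes \<mu> :: "'a::comm_monoid_add \<Rightarrow> real"
  assumes "fuzzy_h_ideal M \<mu>"
  shows "0 \<le> \<mu> x" "\<mu> x \<le> 1" "\<exists>w. \<mu> w \<noteq> 0"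
    "\<mu> (x + y) \<ge> min (\<mu> x) (\<mu> y)"
    "\<mu> (M x \<gamma> y) \<ge> \<mu> x" "\<mu> (M x \<gamma> y) \<ge> \<mu> y"
    "x + a + z = b + z \<Longrightarrow> \<mu> x \<ge> min (\<mu> a) (\<mu> b)"
  using assms unfolding fuzzy_h_ideal_def fuzzy_subset_def by blast+

lemma fi_zero:
  assumes "gamma_hemiring M" "fuzzy_h_ideal M \<mu>"
  shows "\<mu> y \<le> \<mu> 0"
  using fi(6)[OF assms(2), where x=0 and \<gamma>=0 and y=y] hr(4)[OF assms(1)] by simp

lemma fi_zero_pos:
  assumes "gamma_hemiring M" "fuzzy_h_ideal M \<mu>"
  shows "0 < \<mu> 0"
proof -
  obtain w where "\<mu> w \<noteq> 0" using fi(3)[OF assms(2)] by blast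
  with fi(1)[OF assms(2), of w] fi_zero[OF assms, of w] show ?thesis by linarith
qed

lemma chi_ideal:
  fixes I :: "'a::comm_monoid_add set" and M :: "'a \<Rightarrow> 'g::comm_monoid_add \<Rightarrow> 'a \<Rightarrow> 'a"
  assumes "gamma_hemiring M" "0 \<in> I" "\<And>a b. a \<in> I \<Longrightarrow> b \<in> I \<Longrightarrow> a + b \<in> I"
    "\<And>a c \<gamma>. a \<in> I \<Longrightarrow> M a \<gamma> c \<in> I" "\<And>a c \<gamma>. a \<in> I \<Longrightarrow> M c \<gamma> a \<in> I"
    "\<And>x a b z. x + a + z = b + z \<Longrightarrow> a \<in> I \<Longrightarrow> b \<in> I \<Longrightarrow> x \<in> I"
    "0 < c" "c \<le> (1::real)"
  shows "fuzzy_h_ideal M (\<lambda>z. if z \<in> I then c else 0)"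
  unfolding fuzzy_h_ideal_def fuzzy_subset_def
proof (intro conjI allI impI)
  show "\<exists>x. (if x \<in> I then c else 0) \<noteq> 0" using assms(2,7) by (intro exI[of _ 0]) auto
next
  fix x a b z :: 'a assume "x + a + z = b + z"
  then show "min (if a \<in> I then c else 0) (if b \<in> I then c else 0) \<le> (if x \<in> I then c else 0)"
    using assms(6)[of x a z b] assms(7) by auto
next
  fix x :: 'a show "0 \<le> (if x \<in> I then c else 0)" using assms(7) by simp
next
  fix x :: 'a show "(if x \<in> I then c else 0) \<le> 1" using assms(7,8) by simp
next
  fix x y :: 'a show "min (if x \<in> I then c else 0) (if y \<in> I then c else 0) \<le> (if x + y \<in> I then c else 0)"
    using assms(3)[of x y] assms(7) by auto
next
  fix x y :: 'a and \<gamma> show "(if x \<in> I then c else 0) \<le> (if M x \<gamma> y \<in> I then c else 0)"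
    using assms(4)[of x \<gamma> y] assms(7) by auto
next
  fix x y :: 'a and \<gamma> show "(if y \<in> I then c else 0) \<le> (if M x \<gamma> y \<in> I then c else 0)"
    using assms(5)[of y x \<gamma>] assms(7) by auto
qed

lemma const_ideal:
  assumes "gamma_hemiring M" "0 < c" "c \<le> (1::real)"
  shows "fuzzy_h_ideal M (\<lambda>z. c)"
  using assms unfolding fuzzy_h_ideal_def fuzzy_subset_def by auto

lemma hprod_le:
  assumes "\<And>z a1 a2 b1 b2 \<gamma> \<delta> w. x + M a1 \<gamma> b1 + w = M a2 \<delta> b2 + w \<Longrightarrow>
     min (min (\<sigma> a1) (\<sigma> a2)) (min (\<theta> b1) (\<theta> b2)) \<le> \<mu> x"
    and "0 \<le> \<mu> x"
  shows "h_product M \<sigma> \<theta> x \<le> \<mu> x"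
  unfolding h_product_def Let_def
  using assms by (auto intro!: cSup_least)

definition ext_term where "ext_term M x p y = M (M x (fst (snd p)) (fst p)) (snd (snd p)) y"

lemma ext_lower:
  assumes "fuzzy_h_ideal M \<mu>"
  shows "fuzzy_ext M x \<mu> y \<le> \<mu> (M (M x \<alpha> s) \<gamma> y)"
proof -
  have "fuzzy_ext M x \<mu> y \<le> \<mu> (M (M x (fst (snd (s,\<alpha>,\<gamma>))) (fst (s,\<alpha>,\<gamma>))) (snd (snd (s,\<alpha>,\<gamma>))) y)"
    unfolding fuzzy_ext_def
    by (rule cINF_lower) (auto intro!: bdd_belowI[of _ 0] fi(1)[OF assms])
  then show ?thesis by simp
qed

lemma ext_greatest:
  assumes "\<And>\<alpha> s \<gamma>. c \<le> \<mu> (M (M x \<alpha> s) \<gamma> y)"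
  shows "c \<le> fuzzy_ext M x \<mu> y"
  unfolding fuzzy_ext_def by (rule cINF_greatest) (auto intro: assms)

lemma ext_ge:
  assumes "fuzzy_h_ideal M \<mu>"
  shows "\<mu> y \<le> fuzzy_ext M x \<mu> y"
  by (rule ext_greatest) (rule fi(6)[OF assms])

lemma ext_ideal:
  fixes M :: "'a::comm_monoid_add \<Rightarrow> 'g::comm_monoid_add \<Rightarrow> 'a \<Rightarrow> 'a"
  assumes g: "gamma_hemiring M" and m: "fuzzy_h_ideal M \<mu>"
  shows "fuzzy_h_ideal M (fuzzy_ext M x \<mu>)"
  unfolding fuzzy_h_ideal_def fuzzy_subset_def
proof (intro conjI allI impI)
  fix y
  show "0 \<le> fuzzy_ext M x \<mu> y" by (rule ext_greatest) (rule fi(1)[OF m])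
  show "fuzzy_ext M x \<mu> y \<le> 1" using ext_lower[OF m, of x y 0 0 0] fi(2)[OF m, of "M (M x 0 0) 0 y"] by linarith
next
  obtain w where "\<mu> w \<noteq> 0" using fi(3)[OF m] by blast
  then show "\<exists>w. fuzzy_ext M x \<mu> w \<noteq> 0" using fi(1)[OF m, of w] ext_ge[OF m, of w x]
    by (intro exI[of _ w]) linarith
next
  fix y y'
  show "min (fuzzy_ext M x \<mu> y) (fuzzy_ext M x \<mu> y') \<le> fuzzy_ext M x \<mu> (y + y')"
  proof (rule ext_greatest)
    fix \<alpha> s \<gamma>
    have "min (\<mu> (M (M x \<alpha> s) \<gamma> y)) (\<mu> (M (M x \<alpha> s) \<gamma> y')) \<le> \<mu> (M (M x \<alpha> s) \<gamma> (y + y'))"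
      using fi(4)[OF m] hr(2)[OF g] by metis
    then show "min (fuzzy_ext M x \<mu> y) (fuzzy_ext M x \<mu> y') \<le> \<mu> (M (M x \<alpha> s) \<gamma> (y + y'))"
      using ext_lower[OF m, of x y \<alpha> s \<gamma>] ext_lower[OF m, of x y' \<alpha> s \<gamma>] by linarith
  qed
next
  fix y y' \<beta>
  show "fuzzy_ext M x \<mu> y \<le> fuzzy_ext M x \<mu> (M y \<beta> y')"
  proof (rule ext_greatest)
    fix \<alpha> s \<gamma>
    have "M (M x \<alpha> s) \<gamma> (M y \<beta> y') = M (M (M x \<alpha> s) \<gamma> y) \<beta> y'" using hr(3)[OF g] by metis
    then show "fuzzy_ext M x \<mu> y \<le> \<mu> (M (M x \<alpha> s) \<gamma> (M y \<beta> y'))"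
      using ext_lower[OF m, of x y \<alpha> s \<gamma>] fi(5)[OF m, of "M (M x \<alpha> s) \<gamma> y" \<beta> y'] by (metis order_trans)
  qed
  show "fuzzy_ext M x \<mu> y' \<le> fuzzy_ext M x \<mu> (M y \<beta> y')"
  proof (rule ext_greatest)
    fix \<alpha> s \<gamma>
    have "M (M x \<alpha> s) \<gamma> (M y \<beta> y') = M (M x \<alpha> (M s \<gamma> y)) \<beta> y'" using hr(3)[OF g] by metis
    then show "fuzzy_ext M x \<mu> y' \<le> \<mu> (M (M x \<alpha> s) \<gamma> (M y \<beta> y'))"
      using ext_lower[OF m, of x y' \<alpha> "M s \<gamma> y" \<beta>] by simp
  qed
next
  fix y a b z :: 'a assume e: "y + a + z = b + z"
  show "min (fuzzy_ext M x \<mu> a) (fuzzy_ext M x \<mu> b) \<le> fuzzy_ext M x \<mu> y"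
  proof (rule ext_greatest)
    fix \<alpha> s \<gamma>
    let ?m = "\<lambda>u. M (M x \<alpha> s) \<gamma> u"
    have "?m y + ?m a + ?m z = ?m b + ?m z" using e hr(2)[OF g] by metis
    then have "min (\<mu> (?m a)) (\<mu> (?m b)) \<le> \<mu> (?m y)" by (rule fi(7)[OF m])
    then show "min (fuzzy_ext M x \<mu> a) (fuzzy_ext M x \<mu> b) \<le> \<mu> (?m y)"
      using ext_lower[OF m, of x a \<alpha> s \<gamma>] ext_lower[OF m, of x b \<alpha> s \<gamma>] by linarith
  qed
qed


lemma part1:
  fixes M :: "'a::comm_monoid_add \<Rightarrow> 'g::comm_monoid_add \<Rightarrow> 'a \<Rightarrow> 'a"
  assumes g: "gamma_hemiring M" and p: "prime_fuzzy_h_ideal M \<mu>" and x: "\<mu> x \<noteq> \<mu> 0"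
  shows "fuzzy_ext M x \<mu> = \<mu>"
proof -
  have m: "fuzzy_h_ideal M \<mu>" using p unfolding prime_fuzzy_h_ideal_def by blast
  have pr: "\<And>\<sigma> \<theta>. fuzzy_h_ideal M \<sigma> \<Longrightarrow> fuzzy_h_ideal M \<theta> \<Longrightarrow> h_product M \<sigma> \<theta> \<le> \<mu>
        \<Longrightarrow> \<sigma> \<le> \<mu> \<or> \<theta> \<le> \<mu>"
    using p unfolding prime_fuzzy_h_ideal_def by blast
  have pos: "0 < \<mu> 0" by (rule fi_zero_pos[OF g m])
  have le1: "\<mu> 0 \<le> 1" by (rule fi(2)[OF m])
  have top: "\<And>y. \<mu> y \<le> \<mu> 0" by (rule fi_zero[OF g m])
  have top_eq: "\<And>y. \<mu> 0 \<le> \<mu> y \<Longrightarrow> \<mu> y = \<mu> 0" using top by (meson antisym)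
  have "\<exists>\<alpha> s. \<mu> (M x \<alpha> s) \<noteq> \<mu> 0"
  proof (rule ccontr)
    assume "\<not> ?thesis"
    then have all: "\<And>\<alpha> s. \<mu> (M x \<alpha> s) = \<mu> 0" by blast
    define C where "C = {c. \<forall>\<gamma> b. \<mu> (M c \<gamma> b) = \<mu> 0}"
    define \<sigma> where "\<sigma> = (\<lambda>z. if z \<in> C then \<mu> 0 else 0)"
    define \<theta> where "\<theta> = (\<lambda>z::'a. \<mu> 0)"
    have s: "fuzzy_h_ideal M \<sigma>" unfolding \<sigma>_def
    proof (rule chi_ideal[OF g _ _ _ _ _ pos le1])
      show "0 \<in> C" unfolding C_def using hr(4)[OF g] by simp
    next
      fix a b assume "a \<in> C" "b \<in> C"
      show "a + b \<in> C" unfolding C_def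
      proof (intro CollectI allI)
        fix \<gamma> d
        have "min (\<mu> (M a \<gamma> d)) (\<mu> (M b \<gamma> d)) \<le> \<mu> (M (a + b) \<gamma> d)"
          unfolding hr(1)[OF g] by (rule fi(4)[OF m])
        then show "\<mu> (M (a + b) \<gamma> d) = \<mu> 0" using \<open>a \<in> C\<close> \<open>b \<in> C\<close> top_eq unfolding C_def by simp
      qed
    next
      fix a c \<gamma> assume "a \<in> C"
      show "M a \<gamma> c \<in> C" unfolding C_def
      proof (intro CollectI allI)
        fix \<beta> d
        have "\<mu> (M a \<gamma> (M c \<beta> d)) \<le> \<mu> (M (M a \<gamma> c) \<beta> d)" unfolding hr(3)[OF g] by simp
        then show "\<mu> (M (M a \<gamma> c) \<beta> d) = \<mu> 0" using \<open>a \<in> C\<close> top_eq unfolding C_def by simp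
      qed
    next
      fix a c \<gamma> assume "a \<in> C"
      show "M c \<gamma> a \<in> C" unfolding C_def
      proof (intro CollectI allI)
        fix \<beta> d
        have "\<mu> (M a \<beta> d) \<le> \<mu> (M (M c \<gamma> a) \<beta> d)" unfolding hr(3)[OF g, symmetric] by (rule fi(6)[OF m])
        then show "\<mu> (M (M c \<gamma> a) \<beta> d) = \<mu> 0" using \<open>a \<in> C\<close> top_eq unfolding C_def by simp
      qed
    next
      fix y a b z assume e: "y + a + z = b + z" and "a \<in> C" "b \<in> C"
      show "y \<in> C" unfolding C_def
      proof (intro CollectI allI)
        fix \<gamma> d
        have "M y \<gamma> d + M a \<gamma> d + M z \<gamma> d = M b \<gamma> d + M z \<gamma> d" using e hr(1)[OF g] by metis
        then have "min (\<mu> (M a \<gamma> d)) (\<mu> (M b \<gamma> d)) \<le> \<mu> (M y \<gamma> d)" by (rule fi(7)[OF m])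
        then show "\<mu> (M y \<gamma> d) = \<mu> 0" using \<open>a \<in> C\<close> \<open>b \<in> C\<close> top_eq unfolding C_def by simp
      qed
    qed
    have t: "fuzzy_h_ideal M \<theta>" unfolding \<theta>_def by (rule const_ideal[OF g pos le1])
    have "h_product M \<sigma> \<theta> \<le> \<mu>"
    proof (rule le_funI, rule hprod_le)
      fix z a1 a2 b1 b2 \<gamma> \<delta> w
      assume e: "z + M a1 \<gamma> b1 + w = M a2 \<delta> b2 + w"
      show "min (min (\<sigma> a1) (\<sigma> a2)) (min (\<theta> b1) (\<theta> b2)) \<le> \<mu> z"
      proof (cases "a1 \<in> C \<and> a2 \<in> C")
        case True
        have "min (\<mu> (M a1 \<gamma> b1)) (\<mu> (M a2 \<delta> b2)) \<le> \<mu> z" using e by (rule fi(7)[OF m])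
        then have "\<mu> 0 \<le> \<mu> z" using True unfolding C_def by simp
        then show ?thesis unfolding \<theta>_def by simp
      next
        case False
        then show ?thesis unfolding \<sigma>_def using fi(1)[OF m, of z] by auto
      qed
    qed (rule fi(1)[OF m])
    then have "\<sigma> \<le> \<mu> \<or> \<theta> \<le> \<mu>" using pr s t by blast
    moreover have "\<not> \<theta> \<le> \<mu>" unfolding \<theta>_def le_fun_def using x top[of x] by (intro notI) (metis antisym)
    moreover have "x \<in> C" unfolding C_def using all by blast
    ultimately have "\<mu> 0 \<le> \<mu> x" unfolding \<sigma>_def le_fun_def by metis
    then show False using x top_eq by blast
  qed
  then obtain \<alpha>0 s0 where as: "\<mu> (M x \<alpha>0 s0) \<noteq> \<mu> 0" by blast
  define \<nu> where "\<nu> = fuzzy_ext M x \<mu>"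
  have n: "fuzzy_h_ideal M \<nu>" unfolding \<nu>_def by (rule ext_ideal[OF g m])
  define A where "A = {a. \<forall>\<gamma> b. \<nu> b \<le> \<mu> (M a \<gamma> b)}"
  define \<sigma> where "\<sigma> = (\<lambda>z. if z \<in> A then \<mu> 0 else 0)"
  have s: "fuzzy_h_ideal M \<sigma>" unfolding \<sigma>_def
  proof (rule chi_ideal[OF g _ _ _ _ _ pos le1])
    show "0 \<in> A" unfolding A_def
    proof (intro CollectI allI)
      fix \<gamma> b
      have "\<nu> b \<le> \<mu> (M (M x 0 0) 0 b)" unfolding \<nu>_def by (rule ext_lower[OF m])
      then show "\<nu> b \<le> \<mu> (M 0 \<gamma> b)" using top[of "M (M x 0 0) 0 b"] unfolding hr(4)[OF g] by linarith
    qed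
  next
    fix a b assume "a \<in> A" "b \<in> A"
    show "a + b \<in> A" unfolding A_def
    proof (intro CollectI allI)
      fix \<gamma> d
      have "min (\<mu> (M a \<gamma> d)) (\<mu> (M b \<gamma> d)) \<le> \<mu> (M (a + b) \<gamma> d)"
        unfolding hr(1)[OF g] by (rule fi(4)[OF m])
      moreover have "\<nu> d \<le> \<mu> (M a \<gamma> d)" "\<nu> d \<le> \<mu> (M b \<gamma> d)" using \<open>a \<in> A\<close> \<open>b \<in> A\<close> unfolding A_def by blast+
      ultimately show "\<nu> d \<le> \<mu> (M (a + b) \<gamma> d)" by linarith
    qed
  next
    fix a c \<gamma> assume a: "a \<in> A"
    show "M a \<gamma> c \<in> A" unfolding A_def
    proof (intro CollectI allI)
      fix \<beta> b
      have "\<nu> b \<le> \<nu> (M c \<beta> b)" by (rule fi(6)[OF n])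
      also have "\<dots> \<le> \<mu> (M a \<gamma> (M c \<beta> b))" using a unfolding A_def by blast
      finally show "\<nu> b \<le> \<mu> (M (M a \<gamma> c) \<beta> b)" using hr(3)[OF g] by metis
    qed
  next
    fix a c \<gamma> assume a: "a \<in> A"
    show "M c \<gamma> a \<in> A" unfolding A_def
    proof (intro CollectI allI)
      fix \<beta> b
      have "\<nu> b \<le> \<mu> (M a \<beta> b)" using a unfolding A_def by blast
      also have "\<dots> \<le> \<mu> (M c \<gamma> (M a \<beta> b))" by (rule fi(6)[OF m])
      finally show "\<nu> b \<le> \<mu> (M (M c \<gamma> a) \<beta> b)" using hr(3)[OF g] by metis
    qed
  next
    fix y a b z assume e: "y + a + z = b + z" and a: "a \<in> A" and b: "b \<in> A"
    show "y \<in> A" unfolding A_def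
    proof (intro CollectI allI)
      fix \<gamma> d
      have "M y \<gamma> d + M a \<gamma> d + M z \<gamma> d = M b \<gamma> d + M z \<gamma> d" using e hr(1)[OF g] by metis
      then have "min (\<mu> (M a \<gamma> d)) (\<mu> (M b \<gamma> d)) \<le> \<mu> (M y \<gamma> d)" by (rule fi(7)[OF m])
      moreover have "\<nu> d \<le> \<mu> (M a \<gamma> d)" "\<nu> d \<le> \<mu> (M b \<gamma> d)" using a b unfolding A_def by blast+
      ultimately show "\<nu> d \<le> \<mu> (M y \<gamma> d)" by linarith
    qed
  qed
  have "h_product M \<sigma> \<nu> \<le> \<mu>"
  proof (rule le_funI, rule hprod_le)
    fix z a1 a2 b1 b2 \<gamma> \<delta> w
    assume e: "z + M a1 \<gamma> b1 + w = M a2 \<delta> b2 + w"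
    show "min (min (\<sigma> a1) (\<sigma> a2)) (min (\<nu> b1) (\<nu> b2)) \<le> \<mu> z"
    proof (cases "a1 \<in> A \<and> a2 \<in> A")
      case True
      have "min (\<mu> (M a1 \<gamma> b1)) (\<mu> (M a2 \<delta> b2)) \<le> \<mu> z" using e by (rule fi(7)[OF m])
      moreover have "\<nu> b1 \<le> \<mu> (M a1 \<gamma> b1)" "\<nu> b2 \<le> \<mu> (M a2 \<delta> b2)" using True unfolding A_def by blast+
      ultimately show ?thesis by linarith
    next
      case False
      then show ?thesis unfolding \<sigma>_def using fi(1)[OF m, of z] by auto
    qed
  qed (rule fi(1)[OF m])
  then have "\<sigma> \<le> \<mu> \<or> \<nu> \<le> \<mu>" using pr s n by blast
  moreover have "M x \<alpha>0 s0 \<in> A" unfolding A_def \<nu>_def using ext_lower[OF m] by blast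
  ultimately have "\<nu> \<le> \<mu>" using as top_eq unfolding \<sigma>_def le_fun_def by (metis (full_types))
  then show ?thesis unfolding \<nu>_def using ext_ge[OF m] by (intro ext antisym) (auto simp: le_fun_def)
qed

lemma hprod_ge:
  assumes "fuzzy_h_ideal M \<sigma>" "fuzzy_h_ideal M \<theta>"
    and e: "x + M a1 \<gamma> b1 + w = M a2 \<delta> b2 + w"
  shows "min (min (\<sigma> a1) (\<sigma> a2)) (min (\<theta> b1) (\<theta> b2)) \<le> h_product M \<sigma> \<theta> x"
proof -
  let ?V = "{min (min (\<sigma> a1) (\<sigma> a2)) (min (\<theta> b1) (\<theta> b2)) | z a1 a2 b1 b2 \<gamma> \<delta>.
                 x + M a1 \<gamma> b1 + z = M a2 \<delta> b2 + z}"
  have mem: "min (min (\<sigma> a1) (\<sigma> a2)) (min (\<theta> b1) (\<theta> b2)) \<in> ?V" using e by blast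
  have bdd: "bdd_above ?V"
  proof (rule bdd_aboveI[of _ 1])
    fix v assume "v \<in> ?V"
    then obtain c1 c2 d1 d2 where "v = min (min (\<sigma> c1) (\<sigma> c2)) (min (\<theta> d1) (\<theta> d2))" by blast
    then show "v \<le> 1" using fi(2)[OF assms(1), of c1] by linarith
  qed
  have "min (min (\<sigma> a1) (\<sigma> a2)) (min (\<theta> b1) (\<theta> b2)) \<le> Sup ?V"
    by (rule cSup_upper[OF mem bdd])
  moreover have "?V \<noteq> {}" using mem by blast
  ultimately show ?thesis unfolding h_product_def Let_def by (simp only: if_False)
qed

lemma part2:
  fixes M :: "'a::comm_monoid_add \<Rightarrow> 'g::comm_monoid_add \<Rightarrow> 'a \<Rightarrow> 'a"
  assumes g: "gamma_hemiring M" and m: "fuzzy_h_ideal M \<mu>" and r: "range \<mu> = {1, t}"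
    and t: "t < 1" and e: "\<forall>x. \<mu> x = t \<longrightarrow> fuzzy_ext M x \<mu> = \<mu>"
  shows "prime_fuzzy_h_ideal M \<mu>"
  unfolding prime_fuzzy_h_ideal_def
proof (intro conjI allI impI)
  show "fuzzy_h_ideal M \<mu>" by (rule m)
  have "1 \<in> range \<mu>" "t \<in> range \<mu>" using r by auto
  then obtain u v where "\<mu> u = 1" "\<mu> v = t" by auto
  then show "\<exists>x y. \<mu> x \<noteq> \<mu> y" using t by (intro exI[of _ u] exI[of _ v]) simp
next
  fix \<sigma> \<theta> assume "fuzzy_h_ideal M \<sigma> \<and> fuzzy_h_ideal M \<theta> \<and> h_product M \<sigma> \<theta> \<le> \<mu>"
  then have s: "fuzzy_h_ideal M \<sigma>" and th: "fuzzy_h_ideal M \<theta>" and hp: "h_product M \<sigma> \<theta> \<le> \<mu>" by auto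
  have vals: "\<And>y. \<mu> y = 1 \<or> \<mu> y = t" using r by (metis insert_iff rangeI singletonD)
  show "\<sigma> \<le> \<mu> \<or> \<theta> \<le> \<mu>"
  proof (rule ccontr)
    assume "\<not> ?thesis"
    then obtain a b where a: "\<mu> a < \<sigma> a" and b: "\<mu> b < \<theta> b" unfolding le_fun_def by (meson not_le)
    have ta: "\<mu> a = t" using vals[of a] a fi(2)[OF s, of a] by auto
    have tb: "\<mu> b = t" using vals[of b] b fi(2)[OF th, of b] by auto
    have ext: "fuzzy_ext M a \<mu> b = t" using e ta tb by simp
    have "\<exists>\<alpha> s \<gamma>. \<mu> (M (M a \<alpha> s) \<gamma> b) = t"
    proof (rule ccontr)
      assume "\<not> ?thesis"
      then have "\<And>\<alpha> s \<gamma>. 1 \<le> \<mu> (M (M a \<alpha> s) \<gamma> b)" using vals by (metis order_refl)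
      then have "1 \<le> fuzzy_ext M a \<mu> b" by (rule ext_greatest)
      then show False using ext t by simp
    qed
    then obtain \<alpha> s' \<gamma> where z: "\<mu> (M (M a \<alpha> s') \<gamma> b) = t" by blast
    have eq: "M (M a \<alpha> s') \<gamma> b + M 0 \<gamma> b + 0 = M (M a \<alpha> s') \<gamma> b + 0" using hr(4)[OF g] by simp
    have "min (min (\<sigma> 0) (\<sigma> (M a \<alpha> s'))) (min (\<theta> b) (\<theta> b)) \<le> h_product M \<sigma> \<theta> (M (M a \<alpha> s') \<gamma> b)"
      by (rule hprod_ge[OF s th eq])
    moreover have "\<sigma> a \<le> \<sigma> (M a \<alpha> s')" by (rule fi(5)[OF s])
    moreover have "\<sigma> (M a \<alpha> s') \<le> \<sigma> 0" by (rule fi_zero[OF g s])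
    moreover have "h_product M \<sigma> \<theta> (M (M a \<alpha> s') \<gamma> b) \<le> \<mu> (M (M a \<alpha> s') \<gamma> b)"
      using hp by (simp add: le_fun_def)
    ultimately show False using z a b ta tb by linarith
  qed
qed

theorem theorem3p21:
  fixes M :: "'a::comm_monoid_add \<Rightarrow> 'g::comm_monoid_add \<Rightarrow> 'a \<Rightarrow> 'a"
  assumes "gamma_hemiring M"
  shows "(\<forall>\<mu> x. prime_fuzzy_h_ideal M \<mu> \<and> x \<notin> level_zero \<mu> \<longrightarrow> fuzzy_ext M x \<mu> = \<mu>) \<and>
         (\<forall>\<mu> (t::real). fuzzy_h_ideal M \<mu> \<and> range \<mu> = {1, t} \<and> 0 \<le> t \<and> t < 1 \<and>
             (\<forall>x. \<mu> x = t \<longrightarrow> fuzzy_ext M x \<mu> = \<mu>) \<longrightarrow> prime_fuzzy_h_ideal M \<mu>)"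
  using part1[OF assms] part2[OF assms] unfolding level_zero_def by blast

end
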